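(* The relation $\ll_C$ on $\bar M$, defined by $\bar P \ll_C \bar Q$ if and only if $P^*\cap Q\neq\emptyset$, is a chronology on $\bar M$: it is transitive (if $\bar P\ll_C\bar Q$ and $\bar Q\ll_C\bar R$ then $\bar P\ll_C\bar R$) and irreflexive (there is no $\bar P\in\bar M$ with $\bar P\ll_C\bar P$).
   Context: Let $M$ be a strongly causal spacetime, i.e. a time-oriented Lorentzian manifold in which every point has a neighbourhood that no non-spacelike curve enters more than once. For $p,q\in M$ write $p\ll q$ if there is a future-directed timelike curve from $p$ to $q$. Set $I^+(p)=\{q:p\ll q\}$ and $I^-(p)=\{q:q\ll p\}$, and for $S\subset M$ set $I^\pm(S)=\bigcup_{s\in S}I^\pm(s)$. For a curve $\gamma$ (viewed as a point set) put $I^\pm[\gamma]=I^\pm(\gamma)$. A past-set is a set of the form $I^-(S)$ with $S\subset M$. An IP (indecomposable past-set) is a nonempty past-set that is not the union of two proper subsets which are themselves past-sets. Future-sets and IFs are defined dually. $\hat M$ is the set of IPs and $\check M$ the set of IFs. The IPs are exactly the sets $I^-[\gamma]$ for future-directed timelike curves $\gamma$, and dually for IFs. For an IP $P$, its common future is $f(P)=I^+(\{x\in M:P\subset I^-(x)\})$. For an IF $P^*$, its common past is $p(P^* )=I^-(\{x\in M:P^*\subset I^+(x)\})$. $R_{pf}\subset\hat M\times\check M$ is the set of pairs $(P,Q^* )$ satisfying both of the following: - $Q^*\subset f(P)$, and there is no IF $R^*\neq Q^*$ with $Q^*\subset R^*\subset f(P)$; - $P\subset p(Q^* )$, and there is no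 IP $R\neq P$ with $P\subset R\subset p(Q^* )$. The causal completion $\bar M$ is the set of pairs $\bar P=(P,P^* )$ such that one of the following holds: - (i) $(P,P^* )\in R_{pf}$; - (ii) $P=\emptyset$ and $P^*$ is an IF appearing in no pair of $R_{pf}$; - (iii) $P^*=\emptyset$ and $P$ is an IP appearing in no pair of $R_{pf}$. Elements of $\bar M$ are written $\bar P=(P,P^* )$, $\bar Q=(Q,Q^* )$, $\bar R=(R,R^* )$, and so on. *)

theory Defs
  imports Main
begin

text \<open>The spacetime is abstracted to a set of events (a type 'a) together with its
chronological relation ll (p ll q iff there is a future-directed timelike curve from p to q).\<close>

definition Ipast :: "('a \<Rightarrow> 'a \<Rightarrow> bool) \<Rightarrow> 'a set \<Rightarrow> 'a set" where
  "Ipast ll S = {q. \<exists>s\<in>S. ll q s}"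

definition Ifut :: "('a \<Rightarrow> 'a \<Rightarrow> bool) \<Rightarrow> 'a set \<Rightarrow> 'a set" where
  "Ifut ll S = {q. \<exists>s\<in>S. ll s q}"

definition past_set :: "('a \<Rightarrow> 'a \<Rightarrow> bool) \<Rightarrow> 'a set \<Rightarrow> bool" where
  "past_set ll A = (\<exists>S. A = Ipast ll S)"

definition future_set :: "('a \<Rightarrow> 'a \<Rightarrow> bool) \<Rightarrow> 'a set \<Rightarrow> bool" where
  "future_set ll A = (\<exists>S. A = Ifut ll S)"

definition IP :: "('a \<Rightarrow> 'a \<Rightarrow> bool) \<Rightarrow> 'a set \<Rightarrow> bool" where
  "IP ll P = (P \<noteq> {} \<and> past_set ll P \<and>
     \<not> (\<exists>A B. past_set ll A \<and> past_set ll B \<and> A \<subset> P \<and> B \<subset> P \<and> P = A \<union> B))"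

definition IF :: "('a \<Rightarrow> 'a \<Rightarrow> bool) \<Rightarrow> 'a set \<Rightarrow> bool" where
  "IF ll P = (P \<noteq> {} \<and> future_set ll P \<and>
     \<not> (\<exists>A B. future_set ll A \<and> future_set ll B \<and> A \<subset> P \<and> B \<subset> P \<and> P = A \<union> B))"

definition common_future :: "('a \<Rightarrow> 'a \<Rightarrow> bool) \<Rightarrow> 'a set \<Rightarrow> 'a set" where
  "common_future ll P = Ifut ll {x. P \<subseteq> Ipast ll {x}}"

definition common_past :: "('a \<Rightarrow> 'a \<Rightarrow> bool) \<Rightarrow> 'a set \<Rightarrow> 'a set" where
  "common_past ll F = Ipast ll {x. F \<subseteq> Ifut ll {x}}"

definition Rpf :: "('a \<Rightarrow> 'a \<Rightarrow> bool) \<Rightarrow> 'a set \<Rightarrow> 'a set \<Rightarrow> bool" where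
  "Rpf ll P Q = (IP ll P \<and> IF ll Q \<and>
     Q \<subseteq> common_future ll P \<and>
     (\<forall>R. IF ll R \<and> Q \<subseteq> R \<and> R \<subseteq> common_future ll P \<longrightarrow> R = Q) \<and>
     P \<subseteq> common_past ll Q \<and>
     (\<forall>R. IP ll R \<and> P \<subseteq> R \<and> R \<subseteq> common_past ll Q \<longrightarrow> R = P))"

definition causal_completion :: "('a \<Rightarrow> 'a \<Rightarrow> bool) \<Rightarrow> ('a set \<times> 'a set) set" where
  "causal_completion ll = {(P, F).
     Rpf ll P F
   \<or> (P = {} \<and> IF ll F \<and> \<not> (\<exists>P'. Rpf ll P' F))
   \<or> (F = {} \<and> IP ll P \<and> \<not> (\<exists>F'. Rpf ll P F'))}"

definition llC :: "'a set \<times> 'a set \<Rightarrow> 'a set \<times> 'a set \<Rightarrow> bool" where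
  "llC X Y = (snd X \<inter> fst Y \<noteq> {})"

definition strongly_causal_chronology :: "('a \<Rightarrow> 'a \<Rightarrow> bool) \<Rightarrow> bool" where
  "strongly_causal_chronology ll =
     ((\<forall>p q r. ll p q \<longrightarrow> ll q r \<longrightarrow> ll p r)
    \<and> (\<forall>p. \<not> ll p p)
    \<and> (\<forall>p q. ll p q \<longrightarrow> (\<exists>r. ll p r \<and> ll r q))
    \<and> (\<forall>p. (\<exists>q. ll p q) \<and> (\<exists>q. ll q p))
    \<and> (\<forall>p q. Ipast ll {p} = Ipast ll {q} \<longrightarrow> p = q)
    \<and> (\<forall>p q. Ifut ll {p} = Ifut ll {q} \<longrightarrow> p = q))"

end

theory Submission
  imports Defs
begin

lemma IP_down:
  assumes tr: "\<forall>p q r. ll p q \<longrightarrow> ll q r \<longrightarrow> ll p r"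
    and "IP ll R" "b \<in> R" "ll a b" shows "a \<in> R"
proof -
  from assms(2) obtain S where "R = Ipast ll S" unfolding IP_def past_set_def by blast
  with assms show ?thesis unfolding Ipast_def by blast
qed

theorem theorem2:
  fixes ll :: "'a \<Rightarrow> 'a \<Rightarrow> bool"
  assumes "strongly_causal_chronology ll"
  shows "(\<forall>X\<in>causal_completion ll. \<forall>Y\<in>causal_completion ll. \<forall>Z\<in>causal_completion ll.
            llC X Y \<and> llC Y Z \<longrightarrow> llC X Z)
       \<and> \<not> (\<exists>X\<in>causal_completion ll. llC X X)"
proof
  have tr: "\<forall>p q r. ll p q \<longrightarrow> ll q r \<longrightarrow> ll p r" and irr: "\<forall>p. \<not> ll p p"
    using assms unfolding strongly_causal_chronology_def by auto
  show "\<forall>X\<in>causal_completion ll. \<forall>Y\<in>causal_completion ll. \<forall>Z\<in>causal_completion ll.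
            llC X Y \<and> llC Y Z \<longrightarrow> llC X Z"
  proof (intro ballI impI)
    fix X Y Z assume X: "X \<in> causal_completion ll" and Y: "Y \<in> causal_completion ll"
      and Z: "Z \<in> causal_completion ll" and h: "llC X Y \<and> llC Y Z"
    obtain P P' where XP: "X = (P, P')" by force
    obtain Q Q' where YQ: "Y = (Q, Q')" by force
    obtain R R' where ZR: "Z = (R, R')" by force
    from h XP YQ ZR obtain a b where a: "a \<in> P'" "a \<in> Q" and b: "b \<in> Q'" "b \<in> R"
      unfolding llC_def by auto
    have "Rpf ll Q Q'" using Y YQ a b unfolding causal_completion_def by auto
    then have "Q' \<subseteq> common_future ll Q" unfolding Rpf_def by blast
    with b obtain y where y: "Q \<subseteq> Ipast ll {y}" "ll y b"
      unfolding common_future_def Ifut_def by blast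
    with a have "ll a y" unfolding Ipast_def by blast
    with y tr have ab: "ll a b" by blast
    have "IP ll R" using Z ZR b unfolding causal_completion_def Rpf_def by auto
    with IP_down[OF tr this b(2) ab] have "a \<in> R" by blast
    with a XP ZR show "llC X Z" unfolding llC_def by auto
  qed
  show "\<not> (\<exists>X\<in>causal_completion ll. llC X X)"
  proof
    assume "\<exists>X\<in>causal_completion ll. llC X X"
    then obtain P P' x where X: "(P, P') \<in> causal_completion ll" and x: "x \<in> P'" "x \<in> P"
      unfolding llC_def by force
    have "Rpf ll P P'" using X x unfolding causal_completion_def by auto
    then have "P' \<subseteq> common_future ll P" unfolding Rpf_def by blast
    with x obtain y where y: "P \<subseteq> Ipast ll {y}" "ll y x"
      unfolding common_future_def Ifut_def by blast
    with x have "ll x y" unfolding Ipast_def by blast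
    with y tr irr show False by blast
  qed
qed

end
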